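(* Let $K$ be a finite simplicial complex with stratification $\mathcal S$ and assignment map $s$, let $(f,s)$ be a discrete stratified Morse function on $K$, and let $V$ be the discrete gradient vector field $V=\bigcup_i V_i$ (defined below). Extend the partial order on $\mathcal S$ (given by $S_i<S_j$ iff $S_i\subseteq\overline{S_j}$) to a linear order and write the strata as $S_1<S_2<\cdots<S_n$. Then there is a discrete Morse function $g:K\to\mathbb R$ such that (1) the gradient vector field of $g$ is exactly $V$, and (2) there are real numbers $a_1<a_2<\cdots<a_n$ with $g^{-1}(-\infty,a_i]=\bigcup_{j\le i}S_j$ (as sets of simplices) for each $1\le i\le n$.
   Context: A finite simplicial complex $K$ is regarded as a finite set of open simplices closed under taking faces; closures are taken in $|K|$. A stratification of $K$ is a finite collection $\mathcal S=\{S_i\}$ of pairwise disjoint, locally closed subsets of $|K|$, each a union of open simplices, covering $|K|$, with $S_i\cap\overline{S_j}\neq\emptyset$ iff $S_i\subseteq\overline{S_j}$; $s:K\to\mathcal S$ sends a simplex to the stratum containing it. For $f:K\to\mathbb R$ and a $p$-simplex $\alpha$: $U(\alpha)=\{\beta^{(p+1)}>\alpha: f(\beta)\le f(\alpha)\}$, $L(\alpha)=\{\gamma^{(p-1)}<\alpha: f(\gamma)\ge f(\alpha)\}$, and $U_s,L_s$ are the subsets consisting of simplices in the same stratum as $\alpha$. $f$ is a discrete Morse function if $|U(\alpha)|\le1,|L(\alpha)|\le1$ for all $\alpha$; $(f,s)$ is a discrete stratified Morse function if $|U_s(\alpha)|\le1$, $|L_s(\alpha)|\le1$ and not both are nonempty,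 for all $\alpha$. $V_i$ is the set of pairs $\{\alpha^{(p)}<\beta^{(p+1)}\}$ with $\alpha,\beta\subseteq S_i$ and $f(\beta)\le f(\alpha)$, and $V=\bigcup_iV_i$. The gradient vector field of a discrete Morse function $g$ is the set of pairs $\{\alpha^{(p)}<\beta^{(p+1)}\}$ with $g(\beta)\le g(\alpha)$. *)

theory Defs
  imports Complex_Main
begin

(* A finite simplicial complex: a finite set of simplices (finite nonempty vertex sets),
   closed under taking nonempty faces.  Each simplex stands for the open simplex. *)
definition simplicial_complex :: "'a set set \<Rightarrow> bool" where
  "simplicial_complex K \<longleftrightarrow> finite K \<and>
     (\<forall>\<sigma>\<in>K. finite \<sigma> \<and> \<sigma> \<noteq> {}) \<and>
     (\<forall>\<sigma>\<in>K. \<forall>\<tau>. \<tau> \<noteq> {} \<longrightarrow> \<tau> \<subseteq> \<sigma> \<longrightarrow> \<tau> \<in> K)"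

definition facet :: "'a set \<Rightarrow> 'a set \<Rightarrow> bool" where
  "facet \<alpha> \<beta> \<longleftrightarrow> \<alpha> \<subset> \<beta> \<and> card \<beta> = card \<alpha> + 1"

(* closure in |K| of a union A of open simplices: union of all faces of its simplices *)
definition cl :: "'a set set \<Rightarrow> 'a set set \<Rightarrow> 'a set set" where
  "cl K A = {\<sigma>\<in>K. \<exists>\<tau>\<in>A. \<sigma> \<subseteq> \<tau>}"

(* a union of open simplices S is locally closed in |K| iff it is open in its closure,
   i.e. iff cl(S) - S is closed, i.e. a subcomplex (closed under faces) *)
definition locally_closed :: "'a set set \<Rightarrow> 'a set set \<Rightarrow> bool" where
  "locally_closed K S \<longleftrightarrow>
     (\<forall>\<sigma>\<in>cl K S - S. \<forall>\<tau>\<in>K. \<tau> \<subseteq> \<sigma> \<longrightarrow> \<tau> \<in> cl K S - S)"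

definition stratification :: "'a set set \<Rightarrow> 'a set set set \<Rightarrow> bool" where
  "stratification K \<S> \<longleftrightarrow> finite \<S> \<and>
     (\<forall>S\<in>\<S>. S \<subseteq> K \<and> locally_closed K S) \<and>
     (\<forall>S\<in>\<S>. \<forall>T\<in>\<S>. S \<noteq> T \<longrightarrow> S \<inter> T = {}) \<and>
     \<Union>\<S> = K \<and>
     (\<forall>S\<in>\<S>. \<forall>T\<in>\<S>. S \<inter> cl K T \<noteq> {} \<longleftrightarrow> S \<subseteq> cl K T)"

definition stratum_of :: "'a set set set \<Rightarrow> 'a set \<Rightarrow> 'a set set" where
  "stratum_of \<S> \<alpha> = (THE S. S \<in> \<S> \<and> \<alpha> \<in> S)"

definition U :: "'a set set \<Rightarrow> ('a set \<Rightarrow> real) \<Rightarrow> 'a set \<Rightarrow> 'a set set" where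
  "U K f \<alpha> = {\<beta>\<in>K. facet \<alpha> \<beta> \<and> f \<beta> \<le> f \<alpha>}"

definition L :: "'a set set \<Rightarrow> ('a set \<Rightarrow> real) \<Rightarrow> 'a set \<Rightarrow> 'a set set" where
  "L K f \<alpha> = {\<gamma>\<in>K. facet \<gamma> \<alpha> \<and> f \<gamma> \<ge> f \<alpha>}"

definition U_s :: "'a set set \<Rightarrow> 'a set set set \<Rightarrow> ('a set \<Rightarrow> real) \<Rightarrow> 'a set \<Rightarrow> 'a set set" where
  "U_s K \<S> f \<alpha> = {\<beta>\<in>U K f \<alpha>. stratum_of \<S> \<beta> = stratum_of \<S> \<alpha>}"

definition L_s :: "'a set set \<Rightarrow> 'a set set set \<Rightarrow> ('a set \<Rightarrow> real) \<Rightarrow> 'a set \<Rightarrow> 'a set set" where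
  "L_s K \<S> f \<alpha> = {\<gamma>\<in>L K f \<alpha>. stratum_of \<S> \<gamma> = stratum_of \<S> \<alpha>}"

definition discrete_Morse :: "'a set set \<Rightarrow> ('a set \<Rightarrow> real) \<Rightarrow> bool" where
  "discrete_Morse K f \<longleftrightarrow> (\<forall>\<alpha>\<in>K. card (U K f \<alpha>) \<le> 1 \<and> card (L K f \<alpha>) \<le> 1)"

definition discrete_stratified_Morse ::
    "'a set set \<Rightarrow> 'a set set set \<Rightarrow> ('a set \<Rightarrow> real) \<Rightarrow> bool" where
  "discrete_stratified_Morse K \<S> f \<longleftrightarrow>
     (\<forall>\<alpha>\<in>K. card (U_s K \<S> f \<alpha>) \<le> 1 \<and> card (L_s K \<S> f \<alpha>) \<le> 1 \<and>
        \<not> (U_s K \<S> f \<alpha> \<noteq> {} \<and> L_s K \<S> f \<alpha> \<noteq> {}))"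

definition strat_gradient ::
    "'a set set \<Rightarrow> 'a set set set \<Rightarrow> ('a set \<Rightarrow> real) \<Rightarrow> ('a set \<times> 'a set) set" where
  "strat_gradient K \<S> f =
     {(\<alpha>, \<beta>). \<exists>S\<in>\<S>. \<alpha> \<in> S \<and> \<beta> \<in> S \<and> facet \<alpha> \<beta> \<and> f \<beta> \<le> f \<alpha>}"

definition gradient :: "'a set set \<Rightarrow> ('a set \<Rightarrow> real) \<Rightarrow> ('a set \<times> 'a set) set" where
  "gradient K g = {(\<alpha>, \<beta>). \<alpha> \<in> K \<and> \<beta> \<in> K \<and> facet \<alpha> \<beta> \<and> g \<beta> \<le> g \<alpha>}"

end

theory Submission
  imports Defs
begin

theorem mainTheorem5:
  fixes K :: "'a set set" and \<S> :: "'a set set set" and f :: "'a set \<Rightarrow> real"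
    and S :: "nat \<Rightarrow> 'a set set" and n :: nat
  assumes "simplicial_complex K"
    and "stratification K \<S>"
    and "discrete_stratified_Morse K \<S> f"
    and "n = card \<S>"
    and "bij_betw S {1..n} \<S>"
    and "\<forall>i\<in>{1..n}. \<forall>j\<in>{1..n}. S i \<subseteq> cl K (S j) \<longrightarrow> i \<le> j"
  shows "\<exists>g :: 'a set \<Rightarrow> real. discrete_Morse K g \<and>
           gradient K g = strat_gradient K \<S> f \<and>
           (\<exists>a :: nat \<Rightarrow> real. (\<forall>i\<in>{1..n}. \<forall>j\<in>{1..n}. i < j \<longrightarrow> a i < a j) \<and>
              (\<forall>i\<in>{1..n}. {\<sigma>\<in>K. g \<sigma> \<le> a i} = (\<Union>j\<in>{1..i}. S j)))"
proof -
  have finK: "finite K" using assms(1) unfolding simplicial_complex_def by blast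
  note st0 = assms(2)[unfolded stratification_def]
  have st1: "finite \<S>" using st0 by (rule conjunct1)
  have st2a: "\<forall>S\<in>\<S>. S \<subseteq> K \<and> locally_closed K S" using st0[THEN conjunct2] by (rule conjunct1)
  have st2: "\<forall>S\<in>\<S>. S \<subseteq> K" using st2a by blast
  have st3: "\<forall>S\<in>\<S>. \<forall>T\<in>\<S>. S \<noteq> T \<longrightarrow> S \<inter> T = {}" using st0[THEN conjunct2, THEN conjunct2] by (rule conjunct1)
  have st4: "\<Union>\<S> = K" using st0[THEN conjunct2, THEN conjunct2, THEN conjunct2] by (rule conjunct1)
  have st5: "\<forall>S\<in>\<S>. \<forall>T\<in>\<S>. S \<inter> cl K T \<noteq> {} \<longleftrightarrow> S \<subseteq> cl K T" using st0[THEN conjunct2, THEN conjunct2, THEN conjunct2] by (rule conjunct2)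
  note st = st1 st2 st3 st4 st5
  have bij: "inj_on S {1..n}" "S ` {1..n} = \<S>" using assms(5) unfolding bij_betw_def by (rule conjunct1, rule conjunct2)
  have ex: "\<exists>i\<in>{1..n}. \<sigma> \<in> S i" if "\<sigma> \<in> K" for \<sigma>
    using that st(4) bij(2) by auto
  have uniq: "i = j" if "i\<in>{1..n}" "j\<in>{1..n}" "\<sigma> \<in> S i" "\<sigma> \<in> S j" for i j \<sigma>
  proof (rule ccontr)
    assume "i \<noteq> j"
    then have "S i \<noteq> S j" using bij(1) that(1,2) inj_on_def by metis
    then have "S i \<inter> S j = {}" using st(3) bij(2) that(1,2) by blast
    then show False using that by blast
  qed
  define idx where "idx \<sigma> = (THE i. i\<in>{1..n} \<and> \<sigma> \<in> S i)" for \<sigma>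
  have idx: "idx \<sigma> \<in> {1..n} \<and> \<sigma> \<in> S (idx \<sigma>)" if sK: "\<sigma> \<in> K" for \<sigma>
  proof -
    obtain i where i: "i\<in>{1..n}" "\<sigma> \<in> S i" using ex[OF sK] by blast
    have "idx \<sigma> = i" unfolding idx_def
      by (rule the_equality) (use i uniq in blast)+
    then show ?thesis using i by simp
  qed
  have idx_eq: "idx \<sigma> = i" if "i\<in>{1..n}" "\<sigma> \<in> S i" for i \<sigma>
  proof -
    have "\<sigma> \<in> K" using that st(2) bij(2) by blast
    then show ?thesis using idx uniq that by blast
  qed
  have strat: "stratum_of \<S> \<sigma> = S (idx \<sigma>)" if "\<sigma> \<in> K" for \<sigma>
  proof -
    have "S (idx \<sigma>) \<in> \<S>" using idx[OF that] bij(2) by blast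
    moreover have "T = S (idx \<sigma>)" if "T \<in> \<S>" "\<sigma> \<in> T" for T
    proof -
      obtain j where "j\<in>{1..n}" "T = S j" using \<open>T\<in>\<S>\<close> bij(2) by blast
      then show ?thesis using idx_eq that by blast
    qed
    ultimately show ?thesis unfolding stratum_of_def
      using idx[OF that] by (intro the_equality) blast+
  qed
  have mono: "idx \<alpha> \<le> idx \<beta>" if "\<alpha>\<in>K" "\<beta>\<in>K" "\<alpha> \<subseteq> \<beta>" for \<alpha> \<beta>
  proof -
    have a: "idx \<alpha> \<in> {1..n}" "\<alpha> \<in> S (idx \<alpha>)" and b: "idx \<beta> \<in> {1..n}" "\<beta> \<in> S (idx \<beta>)"
      using idx that by blast+
    have "\<alpha> \<in> cl K (S (idx \<beta>))" unfolding cl_def using that b by blast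
    then have "S (idx \<alpha>) \<inter> cl K (S (idx \<beta>)) \<noteq> {}" using a by blast
    then have "S (idx \<alpha>) \<subseteq> cl K (S (idx \<beta>))" using st(5) bij(2) a b by blast
    then show ?thesis using assms(6) a b by blast
  qed
  define M where "M = (\<Sum>\<sigma>\<in>K. \<bar>f \<sigma>\<bar>)"
  have Mb: "\<bar>f \<sigma>\<bar> \<le> M" if "\<sigma> \<in> K" for \<sigma>
    unfolding M_def using member_le_sum[of \<sigma> K "\<lambda>\<sigma>. \<bar>f \<sigma>\<bar>"] finK that by simp
  define C where "C = 2*M + 1"
  have M0: "M \<ge> 0" unfolding M_def by (simp add: sum_nonneg)
  define g where "g \<sigma> = C * real (idx \<sigma>) + f \<sigma>" for \<sigma>
  have gap: "g \<beta> > C * real i + M" if "\<beta> \<in> K" "i < idx \<beta>" for \<beta> i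
  proof -
    have "real (idx \<beta>) \<ge> real i + 1" using that(2) by simp
    then have "C * real (idx \<beta>) \<ge> C * (real i + 1)"
      using M0 unfolding C_def by (intro mult_left_mono) auto
    then show ?thesis using Mb[OF that(1)] unfolding g_def C_def by (auto simp: algebra_simps)
  qed
  have below: "g \<sigma> \<le> C * real i + M" if "\<sigma> \<in> K" "idx \<sigma> \<le> i" for \<sigma> i
  proof -
    have "C * real (idx \<sigma>) \<le> C * real i"
      using M0 that(2) unfolding C_def by (intro mult_left_mono) auto
    then show ?thesis using Mb[OF that(1)] unfolding g_def by auto
  qed
  have key: "g \<beta> \<le> g \<alpha> \<longleftrightarrow> idx \<alpha> = idx \<beta> \<and> f \<beta> \<le> f \<alpha>"
    if "\<alpha>\<in>K" "\<beta>\<in>K" "\<alpha> \<subseteq> \<beta>" for \<alpha> \<beta>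
  proof (cases "idx \<alpha> = idx \<beta>")
    case True then show ?thesis unfolding g_def by simp
  next
    case False
    then have "idx \<alpha> < idx \<beta>" using mono[OF that] by simp
    then have "g \<beta> > g \<alpha>" using gap[OF that(2)] below[OF that(1)] by fastforce
    then show ?thesis using False by simp
  qed
  have facet_sub: "facet \<alpha> \<beta> \<Longrightarrow> \<alpha> \<subseteq> \<beta>" for \<alpha> \<beta> :: "'a set"
    unfolding facet_def by blast
  have UL: "(\<beta> \<in> U K g \<alpha> \<longleftrightarrow> \<beta> \<in> U_s K \<S> f \<alpha>) \<and> (\<beta> \<in> L K g \<alpha> \<longleftrightarrow> \<beta> \<in> L_s K \<S> f \<alpha>)"
    if "\<alpha> \<in> K" for \<alpha> \<beta>
  proof (cases "\<beta> \<in> K")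
    case False then show ?thesis unfolding U_s_def U_def L_s_def L_def by simp
  next
    case True
    have e: "stratum_of \<S> \<beta> = stratum_of \<S> \<alpha> \<longleftrightarrow> idx \<alpha> = idx \<beta>"
      using strat[OF that] strat[OF True] idx[OF that] idx[OF True] uniq by metis
    have k1: "facet \<alpha> \<beta> \<Longrightarrow> (g \<beta> \<le> g \<alpha> \<longleftrightarrow> idx \<alpha> = idx \<beta> \<and> f \<beta> \<le> f \<alpha>)"
      using key[OF that True] facet_sub by blast
    have k2: "facet \<beta> \<alpha> \<Longrightarrow> (g \<beta> \<ge> g \<alpha> \<longleftrightarrow> idx \<beta> = idx \<alpha> \<and> f \<beta> \<ge> f \<alpha>)"
      using key[OF True that] facet_sub by blast
    show ?thesis unfolding U_s_def U_def L_s_def L_def using True e k1 k2 by auto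
  qed
  have UU: "U K g \<alpha> = U_s K \<S> f \<alpha>" if "\<alpha> \<in> K" for \<alpha>
    using UL[OF that] by blast
  have LL: "L K g \<alpha> = L_s K \<S> f \<alpha>" if "\<alpha> \<in> K" for \<alpha>
    using UL[OF that] by blast
  have dm: "discrete_Morse K g"
    using assms(3) UU LL unfolding discrete_Morse_def discrete_stratified_Morse_def by simp
  have grad: "gradient K g = strat_gradient K \<S> f"
  proof (intro set_eqI iffI)
    fix p assume "p \<in> gradient K g"
    then obtain \<alpha> \<beta> where p: "p = (\<alpha>,\<beta>)" "\<alpha>\<in>K" "\<beta>\<in>K" "facet \<alpha> \<beta>" "g \<beta> \<le> g \<alpha>"
      unfolding gradient_def by blast
    have e: "idx \<alpha> = idx \<beta>" "f \<beta> \<le> f \<alpha>" using key[OF p(2,3) facet_sub[OF p(4)]] p(5) by blast+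
    have "S (idx \<alpha>) \<in> \<S>" using idx[OF p(2)] bij(2) by blast
    then show "p \<in> strat_gradient K \<S> f" unfolding strat_gradient_def
      using p e idx[OF p(2)] idx[OF p(3)] by auto
  next
    fix p assume "p \<in> strat_gradient K \<S> f"
    then obtain \<alpha> \<beta> T where p: "p = (\<alpha>,\<beta>)" "T\<in>\<S>" "\<alpha>\<in>T" "\<beta>\<in>T" "facet \<alpha> \<beta>" "f \<beta> \<le> f \<alpha>"
      unfolding strat_gradient_def by blast
    obtain j where j: "j\<in>{1..n}" "T = S j" using p(2) bij(2) by blast
    have K: "\<alpha>\<in>K" "\<beta>\<in>K" using p st(2) by blast+
    have "idx \<alpha> = idx \<beta>" using idx_eq[OF j(1)] j(2) p(3,4) by metis
    then have "g \<beta> \<le> g \<alpha>" using key[OF K facet_sub[OF p(5)]] p(6) by blast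
    then show "p \<in> gradient K g" unfolding gradient_def using p K by blast
  qed
  define a where "a i = C * real i + M" for i :: nat
  have amono: "\<forall>i\<in>{1..n}. \<forall>j\<in>{1..n}. i < j \<longrightarrow> a i < a j"
  proof (intro ballI impI)
    fix i j :: nat assume "i < j"
    then have "real i < real j" by simp
    moreover have "C > 0" using M0 unfolding C_def by simp
    ultimately show "a i < a j" unfolding a_def by simp
  qed
  have lev: "\<forall>i\<in>{1..n}. {\<sigma>\<in>K. g \<sigma> \<le> a i} = (\<Union>j\<in>{1..i}. S j)"
  proof (intro ballI set_eqI iffI)
    fix i \<sigma> assume i: "i \<in> {1..n}" and s: "\<sigma> \<in> {\<sigma>\<in>K. g \<sigma> \<le> a i}"
    then have "\<sigma> \<in> K" "g \<sigma> \<le> a i" by auto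
    then have "\<not> i < idx \<sigma>" using gap[of \<sigma> i] unfolding a_def by linarith
    then show "\<sigma> \<in> (\<Union>j\<in>{1..i}. S j)" using idx[OF \<open>\<sigma>\<in>K\<close>] by auto
  next
    fix i \<sigma> assume i: "i \<in> {1..n}" and s: "\<sigma> \<in> (\<Union>j\<in>{1..i}. S j)"
    then obtain j where j: "j \<in> {1..i}" "\<sigma> \<in> S j" by blast
    then have jn: "j \<in> {1..n}" using i by auto
    then have K: "\<sigma> \<in> K" using j st(2) bij(2) by blast
    have "idx \<sigma> = j" using idx_eq[OF jn j(2)] .
    then have "g \<sigma> \<le> a i" using below[OF K, of i] j unfolding a_def by auto
    then show "\<sigma> \<in> {\<sigma>\<in>K. g \<sigma> \<le> a i}" using K by blast
  qed
  show ?thesis using dm grad amono lev by blast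
qed

end
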